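(* Let $A\in\mathbb{R}^{n\times n}$ be the weighted adjacency matrix of a strongly connected weighted directed graph on $\{1,\ldots,n\}$, and let $P=D_{out}^{-1}A$, $Q=D_{in}^{-1}A^T$. For $\ell\ge 1$ let $S^{(\ell)}=2^{-\ell}\sum_{|\Psi|=\ell}\Psi(P,Q)\Psi(P,Q)^T$, and set $S^{(0)}=I$. Then for every $\ell\ge 1$, $$S^{(\ell)}=\tfrac12\big(PS^{(\ell-1)}P^T+QS^{(\ell-1)}Q^T\big).$$
   Context: The graph has node set $\{1,\ldots,n\}$; $A_{ij}>0$ is the weight of the link $i\to j$ and $A_{ij}=0$ if there is no such link. Strong connectivity means that for any nodes $i,j$ there is a directed walk from $i$ to $j$. $d^{out}_i=\sum_j A_{ij}$, $d^{in}_i=\sum_j A_{ji}$, $D_{out}=\mathrm{Diag}(d^{out}_1,\ldots,d^{out}_n)$, $D_{in}=\mathrm{Diag}(d^{in}_1,\ldots,d^{in}_n)$ (nonsingular under strong connectivity). A walk pattern is a nonempty finite sequence $\Psi=\psi_1\cdots\psi_\ell$ with $\psi_k\in\{d,r\}$, $|\Psi|=\ell$. For $M,N\in\mathbb{R}^{n\times n}$, $\Psi(M,N)=X_1\cdots X_\ell$ with $X_k=M$ if $\psi_k=d$ and $X_k=N$ if $\psi_k=r$. The sum $\sum_{|\Psi|=\ell}$ runs over all $2^\ell$ walk patterns of length $\ell$. *)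

theory Defs
  imports "HOL-Analysis.Analysis"
begin

definition edges :: "real^'n^'n \<Rightarrow> ('n \<times> 'n) set" where
  "edges A = {(i, j). A $ i $ j > 0}"

definition weighted_adjacency :: "real^'n^'n \<Rightarrow> bool" where
  "weighted_adjacency A \<longleftrightarrow> (\<forall>i j. A $ i $ j \<ge> 0)"

definition strongly_connected :: "real^'n^'n \<Rightarrow> bool" where
  "strongly_connected A \<longleftrightarrow> (\<forall>i j. (i, j) \<in> (edges A)\<^sup>+)"

definition Diag :: "real^'n \<Rightarrow> real^'n^'n" where
  "Diag v = (\<chi> i j. if i = j then v $ i else 0)"

definition dout :: "real^'n^'n \<Rightarrow> real^'n" where
  "dout A = (\<chi> i. \<Sum>j\<in>UNIV. A $ i $ j)"

definition din :: "real^'n^'n \<Rightarrow> real^'n" where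
  "din A = (\<chi> i. \<Sum>j\<in>UNIV. A $ j $ i)"

definition Pmat :: "real^'n^'n \<Rightarrow> real^'n^'n" where
  "Pmat A = matrix_inv (Diag (dout A)) ** A"

definition Qmat :: "real^'n^'n \<Rightarrow> real^'n^'n" where
  "Qmat A = matrix_inv (Diag (din A)) ** transpose A"

text \<open>Walk patterns: lists over bool, True = d, False = r.
  Psi(M,N) = X_1 ... X_l.\<close>
definition pattern_eval :: "bool list \<Rightarrow> real^'n^'n \<Rightarrow> real^'n^'n \<Rightarrow> real^'n^'n" where
  "pattern_eval \<Psi> M N = foldr (\<lambda>b X. (if b then M else N) ** X) \<Psi> (mat 1)"

definition Smat :: "real^'n^'n \<Rightarrow> real^'n^'n \<Rightarrow> nat \<Rightarrow> real^'n^'n" where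
  "Smat P Q l = (if l = 0 then mat 1 else
     (1 / 2 ^ l :: real) *\<^sub>R (\<Sum>\<Psi>\<in>{\<Psi>::bool list. length \<Psi> = l}.
        pattern_eval \<Psi> P Q ** transpose (pattern_eval \<Psi> P Q)))"

end

theory Submission
  imports Defs
begin

lemma mm_sum_left:
  fixes X :: "real^'n^'n"
  shows "finite S \<Longrightarrow> X ** (\<Sum>i\<in>S. f i) = (\<Sum>i\<in>S. X ** f i)"
  by (induct rule: finite_induct) (simp_all add: matrix_add_ldistrib)

lemma mm_add_right:
  fixes X Y Z :: "real^'n^'n"
  shows "(Y + Z) ** X = Y ** X + Z ** X"
  by (simp add: matrix_matrix_mult_def vec_eq_iff sum.distrib algebra_simps)

lemma mm_sum_right:
  fixes X :: "real^'n^'n" and f :: "'b \<Rightarrow> real^'n^'n"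
  shows "finite S \<Longrightarrow> (\<Sum>i\<in>S. f i) ** X = (\<Sum>i\<in>S. f i ** X)"
  by (induct rule: finite_induct) (simp_all add: mm_add_right)

definition Tm :: "real^'n^'n \<Rightarrow> real^'n^'n \<Rightarrow> nat \<Rightarrow> real^'n^'n" where
  "Tm P Q l = (\<Sum>\<Psi>\<in>{\<Psi>::bool list. length \<Psi> = l}.
        pattern_eval \<Psi> P Q ** transpose (pattern_eval \<Psi> P Q))"

lemma Smat_Tm: "Smat P Q l = (1 / 2 ^ l :: real) *\<^sub>R Tm P Q l"
proof (cases "l = 0")
  case True
  have "{\<Psi>::bool list. length \<Psi> = 0} = {[]}" by auto
  then show ?thesis using True
    by (simp add: Smat_def Tm_def pattern_eval_def transpose_mat)
next
  case False
  then show ?thesis by (simp add: Smat_def Tm_def)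
qed

lemma lists_Suc:
  "{\<Psi>::bool list. length \<Psi> = Suc k} =
     Cons True ` {\<Psi>. length \<Psi> = k} \<union> Cons False ` {\<Psi>. length \<Psi> = k}"
  apply (auto simp: length_Suc_conv image_iff)
  done

lemma Tm_Suc:
  fixes P Q :: "real^'n^'n"
  shows "Tm P Q (Suc k) = P ** Tm P Q k ** transpose P + Q ** Tm P Q k ** transpose Q"
proof -
  let ?L = "{\<Psi>::bool list. length \<Psi> = k}"
  let ?g = "\<lambda>\<Psi>. pattern_eval \<Psi> P Q ** transpose (pattern_eval \<Psi> P Q)"
  have fin: "finite ?L" using finite_lists_length_eq[of "UNIV::bool set" k] by simp
  have ev: "pattern_eval (b # xs) P Q = (if b then P else Q) ** pattern_eval xs P Q" for b xs
    by (simp add: pattern_eval_def)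
  have g: "?g (b # xs) = (if b then P else Q) ** ?g xs ** transpose (if b then P else Q)" for b xs
    by (simp add: ev matrix_transpose_mul matrix_mul_assoc)
  have "Tm P Q (Suc k) = sum ?g (Cons True ` ?L) + sum ?g (Cons False ` ?L)"
    unfolding Tm_def lists_Suc
    by (rule sum.union_disjoint) (use fin in auto)
  also have "sum ?g (Cons True ` ?L) = (\<Sum>xs\<in>?L. ?g (True # xs))"
    by (subst sum.reindex) (auto simp: inj_on_def)
  also have "\<dots> = P ** Tm P Q k ** transpose P"
    unfolding Tm_def g by (simp add: mm_sum_left[OF fin] mm_sum_right[OF fin])
  also have "sum ?g (Cons False ` ?L) = (\<Sum>xs\<in>?L. ?g (False # xs))"
    by (subst sum.reindex) (auto simp: inj_on_def)
  also have "\<dots> = Q ** Tm P Q k ** transpose Q"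
    unfolding Tm_def g by (simp add: mm_sum_left[OF fin] mm_sum_right[OF fin])
  finally show ?thesis .
qed

lemma sc_mid:
  fixes P T R :: "real^'n^'n"
  shows "P ** (c *\<^sub>R T) ** R = c *\<^sub>R (P ** T ** R)"
  by (simp add: matrix_scalar_ac scalar_matrix_assoc)

theorem lemma1:
  fixes A :: "real^'n^'n" and l :: nat
  assumes "weighted_adjacency A" and "strongly_connected A" and "l \<ge> 1"
  shows "Smat (Pmat A) (Qmat A) l =
    (1/2 :: real) *\<^sub>R (Pmat A ** Smat (Pmat A) (Qmat A) (l - 1) ** transpose (Pmat A)
            + Qmat A ** Smat (Pmat A) (Qmat A) (l - 1) ** transpose (Qmat A))"
proof -
  obtain k where l: "l = Suc k" using assms(3) by (cases l) auto
  show ?thesis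
    unfolding l Smat_Tm Tm_Suc
    by (simp add: sc_mid scaleR_add_right)
qed

end
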